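(* Let $\Gamma$ be a countably infinite discrete group and let $\boldsymbol{b}=\Gamma\curvearrowright^b (Y,\nu)$ be a non-trivial totally ergodic measure preserving action of $\Gamma$. (i) If $C\subseteq\Gamma$ is a subset such that $\nu(\{y\in Y : C\subseteq \Gamma_y\})>0$, then the subgroup $\langle C\rangle$ generated by $C$ is finite. (ii) For $\nu$-almost every $y\in Y$, the stabilizer $\Gamma_y$ is locally finite.
   Context: A measure preserving action $\Gamma\curvearrowright^b (Y,\nu)$ consists of a standard Borel space $Y$, a Borel probability measure $\nu$, and a Borel $\nu$-preserving action of $\Gamma$ on $Y$. It is non-trivial if $\nu$ is not a point mass, and totally ergodic if its restriction to every infinite subgroup of $\Gamma$ is ergodic. The stabilizer is $\Gamma_y=\{\gamma\in\Gamma:\gamma^b y=y\}$. A group is locally finite if every finitely generated subgroup is finite. *)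

theory Defs
  imports "HOL-Probability.Probability" "HOL-Algebra.Generated_Groups"
begin

definition mp_action :: "('g, 'c) monoid_scheme \<Rightarrow> 'y measure \<Rightarrow> ('g \<Rightarrow> 'y \<Rightarrow> 'y) \<Rightarrow> bool" where
  "mp_action G M b \<longleftrightarrow>
     (\<forall>g\<in>carrier G. b g \<in> M \<rightarrow>\<^sub>M M \<and> distr M M (b g) = M) \<and>
     (\<forall>y\<in>space M. b \<one>\<^bsub>G\<^esub> y = y) \<and>
     (\<forall>g\<in>carrier G. \<forall>h\<in>carrier G. \<forall>y\<in>space M. b (g \<otimes>\<^bsub>G\<^esub> h) y = b g (b h y))"

definition point_mass :: "'y measure \<Rightarrow> bool" where
  "point_mass M \<longleftrightarrow> (\<exists>y\<in>space M. M = return M y)"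

definition ergodic_on :: "'y measure \<Rightarrow> ('g \<Rightarrow> 'y \<Rightarrow> 'y) \<Rightarrow> 'g set \<Rightarrow> bool" where
  "ergodic_on M b H \<longleftrightarrow>
     (\<forall>A\<in>sets M. (\<forall>h\<in>H. b h -` A \<inter> space M = A) \<longrightarrow> measure M A = 0 \<or> measure M A = 1)"

definition totally_ergodic :: "('g, 'c) monoid_scheme \<Rightarrow> 'y measure \<Rightarrow> ('g \<Rightarrow> 'y \<Rightarrow> 'y) \<Rightarrow> bool" where
  "totally_ergodic G M b \<longleftrightarrow> (\<forall>H. subgroup H G \<and> infinite H \<longrightarrow> ergodic_on M b H)"

definition stabilizer :: "('g, 'c) monoid_scheme \<Rightarrow> ('g \<Rightarrow> 'y \<Rightarrow> 'y) \<Rightarrow> 'y \<Rightarrow> 'g set" where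
  "stabilizer G b y = {g \<in> carrier G. b g y = y}"

definition locally_finite :: "('g, 'c) monoid_scheme \<Rightarrow> 'g set \<Rightarrow> bool" where
  "locally_finite G S \<longleftrightarrow> (\<forall>F. finite F \<and> F \<subseteq> S \<longrightarrow> finite (generate G F))"

end

theory Submission
  imports Defs
begin

lemma zero_one_point_mass:
  fixes M :: "'y::polish_space measure"
  assumes P: "prob_space M" and S: "sets M = sets borel"
    and Z: "\<forall>B\<in>sets M. measure M B = 0 \<or> measure M B = 1"
  shows "point_mass M"
proof -
  interpret prob_space M by fact
  have sp: "space M = UNIV" using sets_eq_imp_space_eq[OF S] by simp
  have op: "open U \<Longrightarrow> U \<in> sets M" for U using S by simp
  obtain BB :: "'y set set" where cB: "countable BB" and tB: "topological_basis BB"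
    using ex_countable_basis by blast
  have BBo: "U \<in> BB \<Longrightarrow> open U" for U using tB topological_basis_open by blast
  define N where "N = {U\<in>BB. measure M U = 0}"
  have Nn: "\<Union>N \<in> null_sets M"
  proof -
    have "countable N" using cB unfolding N_def by simp
    moreover have "\<forall>U\<in>N. U \<in> null_sets M"
      unfolding N_def using BBo op by (auto simp: emeasure_eq_measure)
    ultimately show ?thesis using null_sets_UN'[of N "\<lambda>U. U" M] by simp
  qed
  define T where "T = UNIV - \<Union>N"
  have mT: "measure M T = 1"
    using Nn prob_compl[of "\<Union>N"] unfolding T_def sp[symmetric]
    by (auto simp: null_sets_def emeasure_eq_measure)
  have nb: "\<And>x U. x \<in> T \<Longrightarrow> open U \<Longrightarrow> x \<in> U \<Longrightarrow> measure M U = 1"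
  proof -
    fix x U assume x: "x \<in> T" and U: "open U" "x \<in> U"
    obtain V where V: "V \<in> BB" "x \<in> V" "V \<subseteq> U"
      using tB U topological_basisE by blast
    have "V \<notin> N" using x V unfolding T_def by auto
    hence "measure M V = 1" using Z V BBo op unfolding N_def by auto
    moreover have "measure M V \<le> measure M U" using V U op BBo by (intro finite_measure_mono) auto
    moreover have "measure M U \<le> 1" by simp
    ultimately show "measure M U = 1" by simp
  qed
  have "T \<noteq> {}" using mT by auto
  then obtain y where y: "y \<in> T" by blast
  have Ty: "T \<subseteq> {y}"
  proof
    fix z assume z: "z \<in> T"
    show "z \<in> {y}"
    proof (rule ccontr)
      assume "z \<notin> {y}"
      then obtain U V where UV: "open U" "open V" "y \<in> U" "z \<in> V" "U \<inter> V = {}"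
        using separation_t2[of y z] by auto
      have "measure M (U \<union> V) = measure M U + measure M V"
        using UV op by (intro finite_measure_Union) auto
      also have "\<dots> = 2" using nb[OF y UV(1,3)] nb[OF z UV(2,4)] by simp
      finally show False using prob_le_1[of "U \<union> V"] by simp
    qed
  qed
  have Tm: "T \<in> sets M" using Nn unfolding T_def sp[symmetric] by auto
  have sy: "{y} \<in> sets M" using S by simp
  have my: "measure M {y} = 1"
    using sy finite_measure_mono[OF Ty] mT prob_le_1[of "{y}"] by simp
  have "M = return M y"
  proof (rule measure_eqI)
    fix A assume A: "A \<in> sets M"
    show "emeasure M A = emeasure (return M y) A"
    proof (cases "y \<in> A")
      case True
      hence "measure M A = 1" using finite_measure_mono[of "{y}" A] A my prob_le_1[of A] by simp
      thus ?thesis using True A by (simp add: emeasure_eq_measure)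
    next
      case False
      hence "A \<subseteq> UNIV - {y}" by auto
      hence "A \<subseteq> space M - {y}" using sp by simp
      hence "measure M A \<le> measure M (space M - {y})" by (rule finite_measure_mono[OF _ sets.compl_sets[OF sy]])
      also have "\<dots> = 0" using prob_compl[OF sy] my by simp
      finally have "measure M A = 0" using measure_nonneg[of M A] by linarith
      thus ?thesis using False A by (simp add: emeasure_eq_measure)
    qed
  qed simp
  thus ?thesis unfolding point_mass_def using sp by auto
qed


lemma stab_gen:
  assumes G: "group G" and A: "mp_action G M b" and y: "y \<in> space M"
    and C: "C \<subseteq> carrier G" and CS: "C \<subseteq> stabilizer G b y"
  shows "generate G C \<subseteq> stabilizer G b y"
proof
  fix h assume "h \<in> generate G C"
  then show "h \<in> stabilizer G b y"
  proof (induction rule: generate.induct)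
    case one
    then show ?case using A y G unfolding mp_action_def stabilizer_def using monoid.one_closed[OF group.is_monoid[OF G]] by auto
  next
    case (incl h)
    then show ?case using CS by auto
  next
    case (inv h)
    have hc: "h \<in> carrier G" and hy: "b h y = y" using inv CS C unfolding stabilizer_def by auto
    have ic: "inv\<^bsub>G\<^esub> h \<in> carrier G" using G hc by (simp add: group.inv_closed)
    have "b (inv\<^bsub>G\<^esub> h) y = b (inv\<^bsub>G\<^esub> h) (b h y)" using hy by simp
    also have "\<dots> = b (inv\<^bsub>G\<^esub> h \<otimes>\<^bsub>G\<^esub> h) y" using A hc ic y unfolding mp_action_def by auto
    also have "\<dots> = y" using A y G hc unfolding mp_action_def by (simp add: group.l_inv)
    finally show ?case using ic unfolding stabilizer_def by auto
  next
    case (eng h1 h2)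
    have c: "h1 \<in> carrier G" "h2 \<in> carrier G"
      using eng.hyps(1,2) group.generate_in_carrier[OF G C] by auto
    have "b (h1 \<otimes>\<^bsub>G\<^esub> h2) y = b h1 (b h2 y)" using A c y unfolding mp_action_def by auto
    also have "\<dots> = y" using eng.IH unfolding stabilizer_def by auto
    finally show ?case using c G unfolding stabilizer_def using monoid.m_closed[OF group.is_monoid[OF G]] by auto
  qed
qed

lemma fix_meas:
  fixes M :: "'y::polish_space measure"
  assumes S: "sets M = sets borel" and A: "mp_action G M b"
    and C: "C \<subseteq> carrier G" and cC: "countable (carrier G)"
  shows "{y \<in> space M. C \<subseteq> stabilizer G b y} \<in> sets M"
proof -
  have sp: "space M = UNIV" using sets_eq_imp_space_eq[OF S] by simp
  have one: "{y. b g y = y} \<in> sets M" if g: "g \<in> carrier G" for g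
  proof -
    have "b g \<in> M \<rightarrow>\<^sub>M M" using A g unfolding mp_action_def by auto
    hence bm: "b g \<in> borel_measurable M" using measurable_cong_sets[OF refl S] by blast
    have "(\<lambda>y. dist (b g y) y) \<in> borel_measurable M"
      using bm by (intro borel_measurable_dist) (auto simp: measurable_ident_sets[OF S])
    hence "{y \<in> space M. dist (b g y) y = (\<lambda>_. 0::real) y} \<in> sets M"
      by (intro borel_measurable_eq) auto
    thus ?thesis using sp by simp
  qed
  have "{y \<in> space M. C \<subseteq> stabilizer G b y} = (\<Inter>g\<in>C. {y. b g y = y})"
    using C sp unfolding stabilizer_def by auto
  also have "\<dots> \<in> sets M"
    using one C countable_subset[OF C cC] sp
    by (intro sets.countable_INT'') (auto simp del: sets_eq_imp_space_eq simp: sets.top[of M, simplified sp])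
  finally show ?thesis .
qed

theorem lemma3p1:
  fixes G :: "('g, 'c) monoid_scheme"
    and M :: "'y::polish_space measure"
    and b :: "'g \<Rightarrow> 'y \<Rightarrow> 'y"
  assumes "group G"
    and "countable (carrier G)" and "infinite (carrier G)"
    and "prob_space M" and "sets M = sets borel"
    and "mp_action G M b"
    and "\<not> point_mass M"
    and "totally_ergodic G M b"
  shows "(\<forall>C. C \<subseteq> carrier G \<and> measure M {y \<in> space M. C \<subseteq> stabilizer G b y} > 0
              \<longrightarrow> finite (generate G C))
       \<and> (AE y in M. locally_finite G (stabilizer G b y))"
proof -
  note G = assms(1) and cC = assms(2) and P = assms(4) and S = assms(5) and act = assms(6)
    and np = assms(7) and te = assms(8)
  interpret prob_space M by fact
  have sp: "space M = UNIV" using sets_eq_imp_space_eq[OF S] by simp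
  have bsp: "g \<in> carrier G \<Longrightarrow> b g y \<in> space M" for g y using sp by simp
  have part1: "finite (generate G C)"
    if C: "C \<subseteq> carrier G" and pos: "measure M {y \<in> space M. C \<subseteq> stabilizer G b y} > 0" for C
  proof (rule ccontr)
    assume inf: "infinite (generate G C)"
    define H where "H = generate G C"
    define A where "A = {y \<in> space M. C \<subseteq> stabilizer G b y}"
    have Am: "A \<in> sets M" unfolding A_def by (rule fix_meas[OF S act C cC])
    have subH: "subgroup H G" unfolding H_def using group.generate_is_subgroup[OF G C] .
    have Hc: "H \<subseteq> carrier G" using subH subgroup.subset by blast
    have CH: "C \<subseteq> H" unfolding H_def by (auto intro: generate.incl)
    have AH: "y \<in> A \<longleftrightarrow> H \<subseteq> stabilizer G b y" for y
      using stab_gen[OF G act _ C] CH sp unfolding A_def H_def by auto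
    have K: "y \<in> A \<and> b h y = y" if h: "h \<in> H" and hyA: "b h y \<in> A" for h y
    proof -
      have hc: "h \<in> carrier G" using h Hc by auto
      have ic: "inv\<^bsub>G\<^esub> h \<in> H" using subH h by (rule subgroup.m_inv_closed)
      hence "b (inv\<^bsub>G\<^esub> h) (b h y) = b h y" using hyA AH unfolding stabilizer_def by auto
      moreover have "b (inv\<^bsub>G\<^esub> h) (b h y) = y"
      proof -
        have icc: "inv\<^bsub>G\<^esub> h \<in> carrier G" using ic Hc by auto
        have "b (inv\<^bsub>G\<^esub> h) (b h y) = b (inv\<^bsub>G\<^esub> h \<otimes>\<^bsub>G\<^esub> h) y"
          using act hc icc sp unfolding mp_action_def by auto
        also have "\<dots> = y" using act G hc sp unfolding mp_action_def by (simp add: group.l_inv)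
        finally show ?thesis .
      qed
      ultimately have e: "b h y = y" by simp
      thus ?thesis using hyA by simp
    qed
    have inv: "b h -` (B \<inter> A) \<inter> space M = B \<inter> A" if h: "h \<in> H" for h B
    proof -
      have "y \<in> b h -` (B \<inter> A) \<inter> space M \<longleftrightarrow> y \<in> B \<inter> A" for y
      proof
        assume "y \<in> b h -` (B \<inter> A) \<inter> space M"
        thus "y \<in> B \<inter> A" using K[OF h, of y] by auto
      next
        assume y: "y \<in> B \<inter> A"
        hence "b h y = y" using AH h unfolding stabilizer_def by auto
        thus "y \<in> b h -` (B \<inter> A) \<inter> space M" using y sp by auto
      qed
      thus ?thesis by blast
    qed
    have erg: "ergodic_on M b H" using te subH inf unfolding totally_ergodic_def H_def by auto
    have zo: "measure M (B \<inter> A) = 0 \<or> measure M (B \<inter> A) = 1" if B: "B \<in> sets M" for B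
      using erg B Am inv unfolding ergodic_on_def by auto
    have mA: "measure M A = 1" using zo[OF Am] pos unfolding A_def by auto
    have "\<forall>B\<in>sets M. measure M B = 0 \<or> measure M B = 1"
    proof
      fix B assume B: "B \<in> sets M"
      have "measure M (B - A) \<le> measure M (space M - A)"
        using B Am sets.sets_into_space[OF B] by (intro finite_measure_mono) auto
      also have "\<dots> = 0" using prob_compl[OF Am] mA by simp
      finally have d0: "measure M (B - A) = 0" using measure_nonneg[of M "B - A"] by linarith
      have "measure M B \<le> measure M (B \<inter> A) + measure M (B - A)"
      proof -
        have "B = (B \<inter> A) \<union> (B - A)" by auto
        hence "measure M B = measure M ((B \<inter> A) \<union> (B - A))" by simp
        also have "\<dots> \<le> measure M (B \<inter> A) + measure M (B - A)"
          using B Am finite_measure_Union[of "B \<inter> A" "B - A"] by (simp add: Int_Diff_disjoint)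
        finally show ?thesis .
      qed
      moreover have "measure M (B \<inter> A) \<le> measure M B" using B Am by (intro finite_measure_mono) auto
      ultimately have "measure M B = measure M (B \<inter> A)" using d0 by linarith
      thus "measure M B = 0 \<or> measure M B = 1" using zo[OF B] by simp
    qed
    hence "point_mass M" using zero_one_point_mass[OF P S] by blast
    thus False using np by simp
  qed
  define Fs where "Fs = {F. finite F \<and> F \<subseteq> carrier G}"
  have cF: "countable Fs" unfolding Fs_def using countable_Collect_finite_subset[OF cC] .
  have "AE y in M. \<forall>F\<in>Fs. F \<subseteq> stabilizer G b y \<longrightarrow> finite (generate G F)"
  proof (rule AE_ball_countable'[OF _ cF])
    fix F assume F: "F \<in> Fs"
    hence Fc: "F \<subseteq> carrier G" unfolding Fs_def by auto
    show "AE y in M. F \<subseteq> stabilizer G b y \<longrightarrow> finite (generate G F)"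
    proof (cases "finite (generate G F)")
      case True thus ?thesis by simp
    next
      case False
      define A where "A = {y \<in> space M. F \<subseteq> stabilizer G b y}"
      have Am: "A \<in> sets M" unfolding A_def by (rule fix_meas[OF S act Fc cC])
      have "\<not> measure M A > 0" using part1[OF Fc] False unfolding A_def by auto
      hence "measure M A = 0" using measure_nonneg[of M A] by linarith
      hence "A \<in> null_sets M" using Am by (simp add: null_sets_def emeasure_eq_measure)
      thus ?thesis by (rule AE_I') (auto simp: A_def False)
    qed
  qed
  hence "AE y in M. locally_finite G (stabilizer G b y)"
    by eventually_elim (auto simp: locally_finite_def Fs_def stabilizer_def)
  thus ?thesis using part1 by blast
qed

end
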